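(* Let $y_0=x_2x_0x_2^{-1}$. For every integer $n\ge1$, $x_0^n$ has one of the forms $M_0([11,11,11],[17,17,17],\dots)$, $M_0([11,11,11],[11,11,11],\dots)$, $M_{2^r-1}([26,26,26],[0,0,0],\dots)$ for some odd $r\ge1$, or $M_{2^r-1}([11,11,11],[0,0,0],\dots)$ for some even $r\ge2$; and for every $n\ge1$, $y_0^n$ has one of the forms $M_0([11,11,11],[44,219,177],\dots)$, $M_0([11,11,11],[54,193,171],\dots)$, $M_{2^r-1}([26,26,26],[0,157,106],\dots)$ for some odd $r\ge1$, or $M_{2^r-1}([11,11,11],[61,202,160],\dots)$ for some even $r\ge2$.
   Context: Consider infinite upper unitriangular block matrices $X=(X_{r,s})_{r,s\ge1}$ whose entries are $3\times3$ matrices over $\mathbb F_2$, with $X_{r,r}=I$, $X_{r,s}=0$ for $s<r$, and whose upper diagonals are $3$-periodic: for each $j\ge1$ there are $a_{j1},a_{j2},a_{j3}\in M(3,\mathbb F_2)$ with $X_{r,r+j}=a_{j,i}$, where $i\in\{1,2,3\}$, $i\equiv r\pmod 3$; $a_j=[a_{j1},a_{j2},a_{j3}]$ is the $j$-th upper diagonal. For $l\ge0$, $M_l(c_1,c_2,\dots)$ denotes such a matrix whose first $l$ upper diagonals are zero and whose $(l+1)$-st, $(l+2)$-nd, $\dots$ upper diagonals are $c_1,c_2,\dots$; diagonals hidden in "$\dots$" are unspecified, while a matrix written $M_0(c_1,\dots,c_m)$ without dots has all further diagonals zero. A matrix $u=(u_{pq})\in M(3,\mathbb F_2)$ is encoded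 by the integer $256u_{11}+128u_{12}+64u_{13}+32u_{21}+16u_{22}+8u_{23}+4u_{31}+2u_{32}+u_{33}$, and a diagonal by the triple of integers of its three blocks. The elements are $x_0=M_0([11,11,11],[17,17,17],[26,26,26],[11,11,0],[17,0,0])$, $x_2=M_0([46,68,217],[12,194,363],[26,326,77],[46,68,0],[12,0,0])$. *)

theory Defs
  imports "HOL-Analysis.Analysis" "HOL-Library.Z2"
begin

type_synonym blk = "bit ^ 3 ^ 3"

text \<open>Integer encoding of a block: entry u_pq is the bit of weight 2^(8 - (3(p-1)+(q-1))).
  Row/column p of the paper corresponds to the index with Rep_bit1 = p - 1.\<close>
definition enc :: "nat \<Rightarrow> blk" where
  "enc n = (\<chi> p q. if odd (n div 2 ^ (8 - (3 * nat (Rep_bit1 p) + nat (Rep_bit1 q)))) then 1 else 0)"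

text \<open>Infinite block matrices. X r s is the block X_{r+1,s+1} of the paper (0-based indexing).\<close>
type_synonym imat = "nat \<Rightarrow> nat \<Rightarrow> blk"

definition periodic_ut :: "imat \<Rightarrow> bool" where
  "periodic_ut X \<longleftrightarrow> (\<forall>r. X r r = mat 1) \<and> (\<forall>r s. s < r \<longrightarrow> X r s = 0)
     \<and> (\<forall>r s. X (r + 3) (s + 3) = X r s)"

definition mident :: imat where
  "mident r s = (if r = s then mat 1 else 0)"

definition mmul :: "imat \<Rightarrow> imat \<Rightarrow> imat" where
  "mmul X Y r s = (\<Sum>t\<in>{r..s}. X r t ** Y t s)"

primrec mpow :: "imat \<Rightarrow> nat \<Rightarrow> imat" where
  "mpow X 0 = mident"
| "mpow X (Suc n) = mmul (mpow X n) X"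

definition minv :: "imat \<Rightarrow> imat" where
  "minv X = (THE Y. periodic_ut Y \<and> mmul X Y = mident)"

text \<open>The j-th upper diagonal [a_{j1},a_{j2},a_{j3}]; a_{ji} = X_{i,i+j} (paper indexing).\<close>
definition diag :: "imat \<Rightarrow> nat \<Rightarrow> blk \<times> blk \<times> blk" where
  "diag X j = (X 0 j, X 1 (1 + j), X 2 (2 + j))"

definition encd :: "nat \<Rightarrow> nat \<Rightarrow> nat \<Rightarrow> blk \<times> blk \<times> blk" where
  "encd a b c = (enc a, enc b, enc c)"

text \<open>has_form l cs X: X = M_l(c_1,...,c_m,...) (further diagonals unspecified).\<close>
definition has_form :: "nat \<Rightarrow> (blk \<times> blk \<times> blk) list \<Rightarrow> imat \<Rightarrow> bool" where
  "has_form l cs X \<longleftrightarrow> periodic_ut X \<and> (\<forall>j. 1 \<le> j \<and> j \<le> l \<longrightarrow> diag X j = (0, 0, 0))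
     \<and> (\<forall>k < length cs. diag X (l + 1 + k) = cs ! k)"

text \<open>M_0(c_1,...,c_m) without dots: all further diagonals zero.\<close>
definition exact_M0 :: "(blk \<times> blk \<times> blk) list \<Rightarrow> imat" where
  "exact_M0 cs = (\<lambda>r s. if s < r then 0 else if s = r then mat 1
      else if s - r \<le> length cs then
        (let d = cs ! (s - r - 1) in if r mod 3 = 0 then fst d else if r mod 3 = 1 then fst (snd d) else snd (snd d))
      else 0)"

definition x0 :: imat where
  "x0 = exact_M0 [encd 11 11 11, encd 17 17 17, encd 26 26 26, encd 11 11 0, encd 17 0 0]"

definition x2 :: imat where
  "x2 = exact_M0 [encd 46 68 217, encd 12 194 363, encd 26 326 77, encd 46 68 0, encd 12 0 0]"

definition y0 :: imat where
  "y0 = mmul (mmul x2 x0) (minv x2)"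

end

theory Submission
  imports Defs
begin


lemma three_eq_0: "(3::3) = 0" by simp
lemma forall3: "(\<forall>i::3. P i) \<longleftrightarrow> P 0 \<and> P 1 \<and> P 2"
proof -
  have "(\<forall>i::3. P i) \<longleftrightarrow> P 1 \<and> P 2 \<and> P 0" using forall_3[of P] unfolding three_eq_0 .
  then show ?thesis by blast
qed
lemma sum3: "(\<Sum>i\<in>(UNIV::3 set). f i) = f 0 + f 1 + f 2"
proof -
  have "(\<Sum>i\<in>(UNIV::3 set). f i) = f 1 + f 2 + f 0" using sum_3[of f] unfolding three_eq_0 .
  then show ?thesis by (simp add: add.commute add.left_commute)
qed
lemmas blk_simps = vec_eq_iff forall3 sum3 matrix_matrix_mult_def enc_def bit1.Rep_0 bit1.Rep_1 bit1.Rep_numeral mat_def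

lemma matrix_add_rdistrib': "((A::blk) + B) ** C = A ** C + B ** C"
  by (vector matrix_matrix_mult_def sum.distrib[symmetric] field_simps)

lemma sum_mmr: "finite S \<Longrightarrow> (\<Sum>t\<in>S. (f t::blk)) ** (C::blk) = (\<Sum>t\<in>S. f t ** C)"
  by (induction S rule: finite_induct) (auto simp: matrix_add_rdistrib')
lemma sum_mml: "finite S \<Longrightarrow> (C::blk) ** (\<Sum>t\<in>S. (f t::blk)) = (\<Sum>t\<in>S. C ** f t)"
  by (induction S rule: finite_induct) (auto simp: matrix_add_ldistrib)

lemma bit_add_self: "(x::bit) + x = 0" by (cases x) auto
lemma blk_add_self: "(A::blk) + A = 0" by (simp add: vec_eq_iff bit_add_self)
lemma blk_neg: "- (A::blk) = A"
  by (simp add: vec_eq_iff)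

lemma mmul_assoc: "mmul (mmul X Y) Z = mmul X (mmul Y Z)"
proof (intro ext)
  fix r s
  have "mmul (mmul X Y) Z r s = (\<Sum>t\<in>{r..s}. \<Sum>u\<in>{r..t}. X r u ** Y u t ** Z t s)"
    by (simp add: mmul_def sum_mmr)
  also have "\<dots> = (\<Sum>t\<in>{r..s}. \<Sum>u\<in>{u\<in>{r..s}. u \<le> t}. X r u ** Y u t ** Z t s)"
    by (intro sum.cong) auto
  also have "\<dots> = (\<Sum>u\<in>{r..s}. \<Sum>t\<in>{t\<in>{r..s}. u \<le> t}. X r u ** Y u t ** Z t s)"
    by (rule sum.swap_restrict) auto
  also have "\<dots> = (\<Sum>u\<in>{r..s}. \<Sum>t\<in>{u..s}. X r u ** (Y u t ** Z t s))"
    by (intro sum.cong) (auto simp: matrix_mul_assoc)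
  also have "\<dots> = mmul X (mmul Y Z) r s"
    by (simp add: mmul_def sum_mml)
  finally show "mmul (mmul X Y) Z r s = mmul X (mmul Y Z) r s" .
qed

definition madd :: "imat \<Rightarrow> imat \<Rightarrow> imat" where "madd X Y = (\<lambda>r s. X r s + Y r s)"
definition mzero :: imat where "mzero = (\<lambda>r s. 0)"
definition ut :: "imat \<Rightarrow> bool" where "ut X \<longleftrightarrow> (\<forall>r s. s < r \<longrightarrow> X r s = 0)"
definition lo :: "nat \<Rightarrow> imat \<Rightarrow> bool" where "lo a X \<longleftrightarrow> (\<forall>r s. s < r + a \<longrightarrow> X r s = 0)"
definition eqK :: "nat \<Rightarrow> imat \<Rightarrow> imat \<Rightarrow> bool" where
  "eqK K X Y \<longleftrightarrow> (\<forall>r s. s \<le> r + K \<longrightarrow> X r s = Y r s)"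
definition band :: "nat \<Rightarrow> (nat \<Rightarrow> blk) \<Rightarrow> imat" where
  "band a f = (\<lambda>r s. if s = r + a then f r else 0)"

lemma mmul_madd_l: "mmul (madd X Y) Z = madd (mmul X Z) (mmul Y Z)"
  by (simp add: mmul_def madd_def fun_eq_iff matrix_add_rdistrib' sum.distrib)
lemma mmul_madd_r: "mmul Z (madd X Y) = madd (mmul Z X) (mmul Z Y)"
  by (simp add: mmul_def madd_def fun_eq_iff matrix_add_ldistrib sum.distrib)

lemma ut_mmul: "ut (mmul X Y)" by (simp add: ut_def mmul_def)
lemma ut_mident: "ut mident" by (simp add: ut_def mident_def)
lemma ut_mpow: "ut (mpow X n)" by (cases n) (simp_all add: ut_mident ut_mmul)

lemma sum_single:
  assumes "finite S" "c \<in> S" "\<And>t. t \<in> S \<Longrightarrow> t \<noteq> c \<Longrightarrow> f t = 0"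
  shows "sum f S = f c"
proof -
  have "sum f S = f c + sum f (S - {c})" using assms by (simp add: sum.remove)
  also have "sum f (S - {c}) = 0" using assms by (intro sum.neutral) auto
  finally show ?thesis by simp
qed

lemma mmul_mident_l: "ut X \<Longrightarrow> mmul mident X = X"
proof (intro ext)
  fix r s assume u: "ut X"
  show "mmul mident X r s = X r s"
  proof (cases "r \<le> s")
    case True
    then show ?thesis unfolding mmul_def
      by (subst sum_single[where c=r]) (auto simp: mident_def)
  next
    case False then show ?thesis using u by (simp add: mmul_def ut_def)
  qed
qed

lemma mmul_mident_r: "ut X \<Longrightarrow> mmul X mident = X"
proof (intro ext)
  fix r s assume u: "ut X"
  show "mmul X mident r s = X r s"
  proof (cases "r \<le> s")
    case True
    then show ?thesis unfolding mmul_def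
      by (subst sum_single[where c=s]) (auto simp: mident_def)
  next
    case False then show ?thesis using u by (simp add: mmul_def ut_def)
  qed
qed

lemma mident_band: "mident = band 0 (\<lambda>_. mat 1)"
  by (simp add: mident_def band_def fun_eq_iff)

lemma band_mmul: "mmul (band a f) (band b g) = band (a + b) (\<lambda>r. f r ** g (r + a))"
proof (intro ext)
  fix r s
  show "mmul (band a f) (band b g) r s = band (a + b) (\<lambda>r. f r ** g (r + a)) r s"
  proof (cases "s = r + a + b")
    case True
    then show ?thesis unfolding mmul_def
      by (subst sum_single[where c="r+a"]) (auto simp: band_def)
  next
    case False
    then show ?thesis unfolding mmul_def band_def
      by (auto intro!: sum.neutral)
  qed
qed

lemma mpow_add: "mpow X (m + n) = mmul (mpow X m) (mpow X n)"
  by (induction n) (simp_all add: mmul_mident_r ut_mpow mmul_assoc)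

lemma mpow_mult: "mpow X (m * n) = mpow (mpow X m) n"
proof (induction n)
  case (Suc n)
  have "mpow X (m * Suc n) = mpow X (m * n + m)" by (simp add: add.commute)
  then show ?case using Suc by (simp add: mpow_add)
qed simp

lemma mpow_1: "ut X \<Longrightarrow> mpow X 1 = X" by (simp add: mmul_mident_l)
lemma mpow_2: "ut X \<Longrightarrow> mpow X 2 = mmul X X" by (simp add: numeral_2_eq_2 mmul_mident_l)

lemma lo_mmul: "lo a X \<Longrightarrow> lo b Y \<Longrightarrow> lo (a + b) (mmul X Y)"
  unfolding lo_def mmul_def
proof (intro allI impI sum.neutral ballI)
  fix r s t assume A: "\<forall>r s. s < r + a \<longrightarrow> X r s = 0" and B: "\<forall>r s. s < r + b \<longrightarrow> Y r s = 0"
    and s: "s < r + (a + b)" and t: "t \<in> {r..s}"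
  show "X r t ** Y t s = 0"
  proof (cases "t < r + a")
    case True then show ?thesis using A by simp
  next
    case False then have "s < t + b" using s by simp
    then show ?thesis using B by simp
  qed
qed

lemma eqK_cong:
  assumes "eqK p X X'" "eqK q Y Y'" "lo a X" "lo a X'" "lo b Y" "lo b Y'"
    "K \<le> p + b" "K \<le> q + a"
  shows "eqK K (mmul X Y) (mmul X' Y')"
  unfolding eqK_def mmul_def
proof (intro allI impI sum.cong refl)
  fix r s t assume s: "s \<le> r + K" and t: "t \<in> {r..s}"
  show "X r t ** Y t s = X' r t ** Y' t s"
  proof (cases "t < r + a \<or> s < t + b")
    case True then show ?thesis using assms(3-6) by (auto simp: lo_def)
  next
    case False
    then have "t \<le> r + p" "s \<le> t + q" using s assms(7,8) by auto
    then show ?thesis using assms(1,2) by (simp add: eqK_def)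
  qed
qed




lemma eqK_refl: "eqK K X X" by (simp add: eqK_def)
lemma eqK_sym: "eqK K X Y \<Longrightarrow> eqK K Y X" by (simp add: eqK_def)
lemma eqK_trans: "eqK K X Y \<Longrightarrow> eqK K Y Z \<Longrightarrow> eqK K X Z" by (simp add: eqK_def)
lemma eqK_mono: "eqK K X Y \<Longrightarrow> K' \<le> K \<Longrightarrow> eqK K' X Y" by (auto simp add: eqK_def)
lemma lo0: "lo 0 X = ut X" by (simp add: lo_def ut_def)
lemma lo_ut: "lo a X \<Longrightarrow> ut X" by (auto simp add: lo_def ut_def)

lemma periodic_mmul:
  assumes "periodic_ut X" "periodic_ut Y" shows "periodic_ut (mmul X Y)"
  unfolding periodic_ut_def
proof (intro conjI allI impI)
  fix r show "mmul X Y r r = mat 1" using assms by (simp add: mmul_def periodic_ut_def)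
next
  fix r s :: nat assume "s < r" then show "mmul X Y r s = 0" by (simp add: mmul_def)
next
  fix r s
  have pX: "\<And>a b. X (a+3) (b+3) = X a b" and pY: "\<And>a b. Y (a+3) (b+3) = Y a b"
    using assms unfolding periodic_ut_def by blast+
  have "mmul X Y (r + 3) (s + 3) = (\<Sum>t\<in>{r..s}. X (r + 3) (t + 3) ** Y (t + 3) (s + 3))"
    unfolding mmul_def by (rule sum.shift_bounds_cl_nat_ivl)
  also have "\<dots> = mmul X Y r s" by (simp only: pX pY mmul_def)
  finally show "mmul X Y (r + 3) (s + 3) = mmul X Y r s" .
qed

lemma periodic_mident: "periodic_ut mident" by (simp add: periodic_ut_def mident_def)
lemma periodic_mpow: "periodic_ut X \<Longrightarrow> periodic_ut (mpow X n)"
  by (induction n) (simp_all add: periodic_mident periodic_mmul)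

lemma periodic_exact: "periodic_ut (exact_M0 cs)"
  unfolding periodic_ut_def
proof (intro conjI allI impI)
  fix r show "exact_M0 cs r r = mat 1" by (simp add: exact_M0_def)
next
  fix r s :: nat assume "s < r" then show "exact_M0 cs r s = 0" by (simp add: exact_M0_def)
next
  fix r s :: nat
  have e: "(s+3 < r+3) = (s<r)" "(s+3 = r+3) = (s = r)" "(s+3) - (r+3) = s - r" "(r+3) mod 3 = r mod 3"
    by simp_all
  show "exact_M0 cs (r+3) (s+3) = exact_M0 cs r s" by (simp only: exact_M0_def e)
qed

definition model :: "nat \<Rightarrow> (nat \<Rightarrow> blk) \<Rightarrow> (nat \<Rightarrow> blk) \<Rightarrow> imat" where
  "model L A B = madd mident (madd (band L A) (band (Suc L) B))"
definition Q :: "nat \<Rightarrow> (nat \<Rightarrow> blk) \<Rightarrow> (nat \<Rightarrow> blk) \<Rightarrow> imat \<Rightarrow> bool" where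
  "Q L A B X \<longleftrightarrow> ut X \<and> eqK (Suc L) X (model L A B)"

lemma blk_c2: "(a::blk) + n + (n + m) = a + m"
proof -
  have "a + n + (n + m) = a + ((n + n) + m)" by (simp only: add.assoc)
  then show ?thesis by (simp add: blk_add_self)
qed

lemma model_flat: "K < L \<Longrightarrow> eqK K (model L A B) mident"
  by (auto simp: eqK_def model_def madd_def band_def)

lemma Q_square:
  assumes L: "1 \<le> L" and q: "Q L (\<lambda>_. A) (\<lambda>_. B) X" and c: "A ** B = B ** A"
  shows "Q (2*L) (\<lambda>_. A ** A) (\<lambda>_. 0) (mmul X X)"
proof -
  define N where "N = (\<lambda>r s. X r s - mident r s)"
  define T where "T = madd (band L (\<lambda>_. A)) (band (Suc L) (\<lambda>_. B))"
  have uX: "ut X" and eX: "eqK (Suc L) X (model L (\<lambda>_. A) (\<lambda>_. B))" using q by (auto simp: Q_def)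
  have XN: "X = madd mident N" by (simp add: N_def madd_def)
  have loN: "lo L N"
    unfolding lo_def
  proof (intro allI impI)
    fix r s assume "s < r + L"
    show "N r s = 0"
    proof (cases "s < r")
      case True then show ?thesis using uX by (simp add: N_def ut_def mident_def)
    next
      case False
      then have "X r s = model L (\<lambda>_. A) (\<lambda>_. B) r s" using eX \<open>s < r + L\<close> by (simp add: eqK_def)
      then show ?thesis using \<open>s < r + L\<close> by (simp add: N_def model_def madd_def band_def)
    qed
  qed
  have loT: "lo L T" by (auto simp: lo_def T_def madd_def band_def)
  have eNT: "eqK (Suc L) N T" using eX
    by (auto simp: eqK_def N_def T_def model_def madd_def)
  have uN: "ut N" using loN lo_ut by blast
  have e2: "eqK (2*L+1) (mmul N N) (mmul T T)"
    by (rule eqK_cong[OF eNT eNT loN loT loN loT]) auto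
  have TT: "mmul T T = madd (madd (band (2*L) (\<lambda>_. A ** A)) (band (2*L+1) (\<lambda>_. B ** A)))
     (madd (band (2*L+1) (\<lambda>_. A ** B)) (band (2*L+2) (\<lambda>_. B ** B)))"
    unfolding T_def by (simp add: mmul_madd_l mmul_madd_r band_mmul mult_2 add.commute add.left_commute)
  have XX: "mmul X X = madd (madd mident N) (madd N (mmul N N))"
    unfolding XN by (simp add: mmul_madd_l mmul_madd_r mmul_mident_l mmul_mident_r ut_mident uN)
  have AB: "B ** A + A ** B = 0" using c by (simp add: blk_add_self)
  show ?thesis unfolding Q_def
  proof (intro conjI ut_mmul)
    show "eqK (Suc (2 * L)) (mmul X X) (model (2 * L) (\<lambda>_. A ** A) (\<lambda>_. 0))"
      unfolding eqK_def
    proof (intro allI impI)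
      fix r s assume s: "s \<le> r + Suc (2 * L)"
      have "mmul X X r s = mident r s + mmul N N r s"
        by (simp add: XX madd_def blk_c2)
      also have "mmul N N r s = mmul T T r s" using e2 s by (simp add: eqK_def)
      finally show "mmul X X r s = model (2 * L) (\<lambda>_. A ** A) (\<lambda>_. 0) r s"
        using s AB by (auto simp: TT model_def madd_def band_def)
    qed
  qed
qed

lemma flat_pow: "eqK K Y mident \<Longrightarrow> ut Y \<Longrightarrow> eqK K (mpow Y k) mident"
proof (induction k)
  case 0 then show ?case by (simp add: eqK_refl)
next
  case (Suc k)
  have "eqK K (mmul (mpow Y k) Y) (mmul mident mident)"
    by (rule eqK_cong[where a=0 and b=0]) (use Suc in \<open>auto simp: lo0 ut_mpow ut_mident\<close>)
  then show ?case by (simp add: mmul_mident_l ut_mident)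
qed

lemma Q_odd:
  assumes L: "2 \<le> L" and q: "Q L (\<lambda>_. A) (\<lambda>_. 0) X"
  shows "eqK (Suc L) (mpow X (1 + 2*k)) X"
proof -
  have uX: "ut X" using q by (simp add: Q_def)
  have "Q (2*L) (\<lambda>_. A ** A) (\<lambda>_. 0) (mmul X X)"
    using Q_square[OF _ q] L by simp
  then have "eqK (Suc (2*L)) (mmul X X) (model (2*L) (\<lambda>_. A ** A) (\<lambda>_. 0))" by (simp add: Q_def)
  then have "eqK (Suc L) (mmul X X) (model (2*L) (\<lambda>_. A ** A) (\<lambda>_. 0))" by (rule eqK_mono) simp
  moreover have "eqK (Suc L) (model (2*L) (\<lambda>_. A ** A) (\<lambda>_. 0)) mident" by (rule model_flat) (use L in simp)
  ultimately have "eqK (Suc L) (mmul X X) mident" by (rule eqK_trans)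
  then have f: "eqK (Suc L) (mpow (mpow X 2) k) mident"
    by (simp add: flat_pow mpow_2 uX ut_mmul)
  have "mpow X (1 + 2*k) = mmul X (mpow (mpow X 2) k)"
    by (simp only: mpow_add mpow_mult mpow_1[OF uX])
  moreover have "eqK (Suc L) (mmul X (mpow (mpow X 2) k)) (mmul X mident)"
    by (rule eqK_cong[where a=0 and b=0]) (use f in \<open>auto simp: lo0 ut_mpow ut_mident uX eqK_refl\<close>)
  ultimately show ?thesis by (simp add: mmul_mident_r uX)
qed


lemma e11sq: "enc 11 ** enc 11 = enc 26" by (simp add: blk_simps)
lemma e26sq: "enc 26 ** enc 26 = enc 11" by (simp add: blk_simps)
lemma e11_17: "enc 11 ** enc 17 = enc 17 ** enc 11" by (simp add: blk_simps)
lemma e0: "enc 0 = 0" by (simp add: blk_simps)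
lemma e17_26: "enc 17 + enc 26 = enc 11" by (simp add: blk_simps)

lemma e26_17: "enc 26 + enc 17 = enc 11" by (simp add: blk_simps)
lemma mmul_r1: "mmul X Y r (Suc r) = X r r ** Y r (Suc r) + X r (Suc r) ** Y (Suc r) (Suc r)"
proof -
  have "{r..Suc r} = {r, Suc r}" by auto
  then show ?thesis by (simp add: mmul_def)
qed
lemma mmul_r2: "mmul X Y r (Suc (Suc r)) = X r r ** Y r (Suc (Suc r)) + X r (Suc r) ** Y (Suc r) (Suc (Suc r))
   + X r (Suc (Suc r)) ** Y (Suc (Suc r)) (Suc (Suc r))"
proof -
  have "{r..Suc (Suc r)} = {r, Suc r, Suc (Suc r)}" by auto
  then show ?thesis by (simp add: mmul_def add.assoc)
qed

lemma x0_Q: "Q 1 (\<lambda>_. enc 11) (\<lambda>_. enc 17) x0"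
  unfolding Q_def
proof
  show "ut x0" by (simp add: ut_def x0_def exact_M0_def)
  show "eqK (Suc 1) x0 (model 1 (\<lambda>_. enc 11) (\<lambda>_. enc 17))"
    unfolding eqK_def
  proof (intro allI impI)
    fix r s :: nat assume "s \<le> r + Suc 1"
    then have "s < r \<or> s = r \<or> s = r + 1 \<or> s = r + 2" by auto
    then show "x0 r s = model 1 (\<lambda>_. enc 11) (\<lambda>_. enc 17) r s"
      by (auto simp: x0_def exact_M0_def model_def madd_def band_def mident_def encd_def Let_def)
  qed
qed

lemma ut_x0: "ut x0" using x0_Q by (simp add: Q_def)



lemma x0_pow2: "1 \<le> r \<Longrightarrow> Q (2^r) (\<lambda>_. if odd r then enc 26 else enc 11) (\<lambda>_. 0) (mpow x0 (2^r))"
proof (induction r rule: dec_induct)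
  case base
  have "Q (2*1) (\<lambda>_. enc 11 ** enc 11) (\<lambda>_. 0) (mmul x0 x0)"
    by (rule Q_square[OF _ x0_Q e11_17]) simp
  then show ?case by (simp add: mpow_2 ut_x0 e11sq)
next
  case (step r)
  have "mpow x0 (2 ^ Suc r) = mmul (mpow x0 (2^r)) (mpow x0 (2^r))"
  proof -
    have "mpow x0 (2 ^ Suc r) = mpow (mpow x0 (2^r)) 2" by (simp only: mpow_mult[symmetric] power_Suc2)
    then show ?thesis by (simp only: mpow_2[OF ut_mpow])
  qed
  moreover have "Q (2 * 2^r) (\<lambda>_. (if odd r then enc 26 else enc 11) ** (if odd r then enc 26 else enc 11)) (\<lambda>_. 0)
     (mmul (mpow x0 (2^r)) (mpow x0 (2^r)))"
    by (rule Q_square[OF _ step.IH]) simp_all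
  ultimately show ?case by (cases "odd r") (simp_all add: e11sq e26sq)
qed

lemma x0_3: "eqK 2 (mpow x0 3) (model 1 (\<lambda>_. enc 11) (\<lambda>_. enc 11))"
proof -
  have q2: "Q 2 (\<lambda>_. enc 26) (\<lambda>_. 0) (mpow x0 2)" using x0_pow2[of 1] by simp
  have c0: "mpow x0 3 = mmul (mpow x0 2) x0" by (simp add: numeral_3_eq_3 numeral_2_eq_2)
  moreover have c1: "eqK 2 (mmul (mpow x0 2) x0) (mmul (model 2 (\<lambda>_. enc 26) (\<lambda>_. 0)) (model 1 (\<lambda>_. enc 11) (\<lambda>_. enc 17)))"
  proof (rule eqK_cong[where a=0 and b=0 and p=2 and q=2])
    show "eqK 2 (mpow x0 2) (model 2 (\<lambda>_. enc 26) (\<lambda>_. 0))" by (rule eqK_mono[of 3]) (use q2 in \<open>simp_all add: Q_def\<close>)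
    show "eqK 2 x0 (model 1 (\<lambda>_. enc 11) (\<lambda>_. enc 17))" using x0_Q by (auto simp: Q_def numeral_2_eq_2)
  qed (use ut_x0 ut_mpow[of x0 2] in \<open>auto simp: lo0 ut_def model_def madd_def band_def mident_def\<close>)
  moreover have c2: "eqK 2 (mmul (model 2 (\<lambda>_. enc 26) (\<lambda>_. 0)) (model 1 (\<lambda>_. enc 11) (\<lambda>_. enc 17)))
      (model 1 (\<lambda>_. enc 11) (\<lambda>_. enc 11))"
    unfolding eqK_def
  proof (intro allI impI)
    fix r s :: nat assume "s \<le> r + 2"
    then have "s < r \<or> s = r \<or> s = Suc r \<or> s = Suc (Suc r)" by auto
    then show "mmul (model 2 (\<lambda>_. enc 26) (\<lambda>_. 0)) (model 1 (\<lambda>_. enc 11) (\<lambda>_. enc 17)) r s =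
      model 1 (\<lambda>_. enc 11) (\<lambda>_. enc 11) r s"
    proof (elim disjE)
      assume "s < r" then show ?thesis by (simp add: mmul_def model_def madd_def band_def mident_def)
    next
      assume "s = r" then show ?thesis by (simp add: mmul_def model_def madd_def band_def mident_def)
    next
      assume "s = Suc r" then show ?thesis by (simp only: mmul_r1) (simp add: model_def madd_def band_def mident_def)
    next
      assume "s = Suc (Suc r)" then show ?thesis by (simp only: mmul_r2) (simp add: model_def madd_def band_def mident_def e17_26)
    qed
  qed
  show ?thesis unfolding c0 by (rule eqK_trans[OF c1 c2])
qed

lemma x0_odd:
  assumes "odd n"
  shows "eqK 2 (mpow x0 n) (model 1 (\<lambda>_. enc 11) (\<lambda>_. enc 17)) \<or> eqK 2 (mpow x0 n) (model 1 (\<lambda>_. enc 11) (\<lambda>_. enc 11))"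
proof -
  have q4: "Q 4 (\<lambda>_. enc 11) (\<lambda>_. 0) (mpow x0 4)" using x0_pow2[of 2] by simp
  have "eqK 2 (mpow x0 4) (model 4 (\<lambda>_. enc 11) (\<lambda>_. 0))" by (rule eqK_mono[of 5]) (use q4 in \<open>simp_all add: Q_def\<close>)
  then have f4: "eqK 2 (mpow x0 4) mident" by (rule eqK_trans) (rule model_flat, simp)
  have f: "eqK 2 (mpow (mpow x0 4) k) mident" for k by (rule flat_pow[OF f4 ut_mpow])
  have key: "eqK 2 (mpow x0 (c + 4*k)) (mpow x0 c)" for c k
  proof -
    have "mpow x0 (c + 4*k) = mmul (mpow x0 c) (mpow (mpow x0 4) k)" by (simp only: mpow_add mpow_mult)
    moreover have "eqK 2 (mmul (mpow x0 c) (mpow (mpow x0 4) k)) (mmul (mpow x0 c) mident)"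
      by (rule eqK_cong[where a=0 and b=0]) (use f in \<open>auto simp: lo0 ut_mpow ut_mident eqK_refl\<close>)
    ultimately show ?thesis by (simp add: mmul_mident_r ut_mpow)
  qed
  from assms have "n mod 4 = 1 \<or> n mod 4 = 3" by presburger
  then show ?thesis
  proof
    assume "n mod 4 = 1"
    define k where "k = n div 4"
    have "n = 1 + 4 * k" using \<open>n mod 4 = 1\<close> unfolding k_def by presburger
    then have "eqK 2 (mpow x0 n) (mpow x0 1)" using key[of 1 k] by simp
    then have "eqK 2 (mpow x0 n) x0" by (simp add: mmul_mident_l ut_x0)
    moreover have "eqK 2 x0 (model 1 (\<lambda>_. enc 11) (\<lambda>_. enc 17))" using x0_Q by (simp add: Q_def numeral_2_eq_2)
    ultimately show ?thesis using eqK_trans by blast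
  next
    assume "n mod 4 = 3"
    define k where "k = n div 4"
    have "n = 3 + 4 * k" using \<open>n mod 4 = 3\<close> unfolding k_def by presburger
    then have "eqK 2 (mpow x0 n) (mpow x0 3)" using key[of 3 k] by simp
    then show ?thesis using x0_3 eqK_trans by blast
  qed
qed



function rinv :: "imat \<Rightarrow> nat \<Rightarrow> nat \<Rightarrow> blk" where
  "rinv X r s = (if s < r then 0 else if s = r then mat 1
     else - (\<Sum>t\<in>{Suc r..s}. X r t ** rinv X t s))"
  by auto
termination by (relation "Wellfounded.measure (\<lambda>(X,r,s). s - r)") auto

declare rinv.simps[simp del]

lemma ut_rinv: "ut (rinv X)" by (simp add: ut_def rinv.simps)
lemma rinv_diag: "rinv X r r = mat 1" by (simp add: rinv.simps)

lemma rinv_right: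
  assumes d: "\<forall>r. X r r = mat 1"
  shows "mmul X (rinv X) = mident"
proof (intro ext)
  fix r s
  show "mmul X (rinv X) r s = mident r s"
  proof (cases "r < s")
    case True
    have "mmul X (rinv X) r s = X r r ** rinv X r s + (\<Sum>t\<in>{Suc r..s}. X r t ** rinv X t s)"
      unfolding mmul_def using True by (simp add: sum.atLeast_Suc_atMost)
    also have "rinv X r s = - (\<Sum>t\<in>{Suc r..s}. X r t ** rinv X t s)"
      using True rinv.simps[of X r s] by simp
    finally show ?thesis using True d by (simp add: mident_def)
  next
    case False
    then show ?thesis by (cases "r = s") (auto simp: mmul_def mident_def rinv_diag d)
  qed
qed

lemma rinv_unique:
  assumes d: "\<forall>r. X r r = mat 1" and u: "ut Y" and e: "mmul X Y = mident"
  shows "Y = rinv X"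
proof -
  have "\<forall>r s. s - r = n \<longrightarrow> Y r s = rinv X r s" for n
  proof (induction n rule: less_induct)
    case (less n)
    show ?case
    proof (intro allI impI)
      fix r s assume n: "s - r = n"
      show "Y r s = rinv X r s"
      proof (cases "r < s")
        case True
        have IH: "Y t s = rinv X t s" if "t \<in> {Suc r..s}" for t
          using less.IH[of "s - t"] that True n by auto
        have S: "(\<Sum>t\<in>{Suc r..s}. X r t ** Y t s) = (\<Sum>t\<in>{Suc r..s}. X r t ** rinv X t s)"
          by (rule sum.cong) (auto simp: IH)
        have "0 = mmul X Y r s" using e True by (simp add: mident_def)
        also have "\<dots> = Y r s + (\<Sum>t\<in>{Suc r..s}. X r t ** Y t s)"
          unfolding mmul_def using True d by (simp add: sum.atLeast_Suc_atMost)
        finally have "Y r s = - (\<Sum>t\<in>{Suc r..s}. X r t ** rinv X t s)"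
          unfolding S by (simp add: eq_neg_iff_add_eq_0)
        then show ?thesis using True rinv.simps[of X r s] by simp
      next
        case False
        show ?thesis
        proof (cases "r = s")
          case True
          have "mmul X Y r r = mident r r" using e by simp
          then show ?thesis using True d by (simp add: mmul_def mident_def rinv_diag)
        next
          case False
          then have "s < r" using \<open>\<not> r < s\<close> by simp
          then show ?thesis using u by (simp add: ut_def rinv.simps)
        qed
      qed
    qed
  qed
  then show ?thesis by (intro ext) blast
qed

lemma periodic_ut_ut: "periodic_ut X \<Longrightarrow> ut X" by (simp add: periodic_ut_def ut_def)

lemma periodic_rinv:
  assumes p: "periodic_ut X" shows "periodic_ut (rinv X)"
proof -
  have d: "\<forall>r. X r r = mat 1" using p by (simp add: periodic_ut_def)
  have pX: "\<And>a b. X (a+3) (b+3) = X a b" using p unfolding periodic_ut_def by blast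
  define Y where "Y = (\<lambda>r s. rinv X (r+3) (s+3))"
  have uY: "ut Y" using ut_rinv unfolding Y_def ut_def by auto
  have "mmul X Y = mident"
  proof (intro ext)
    fix r s
    have "mmul X Y r s = (\<Sum>t\<in>{r..s}. X (r+3) (t+3) ** rinv X (t+3) (s+3))"
      unfolding mmul_def Y_def by (simp add: pX)
    also have "\<dots> = mmul X (rinv X) (r+3) (s+3)"
      unfolding mmul_def by (rule sum.shift_bounds_cl_nat_ivl[symmetric])
    also have "\<dots> = mident r s" by (simp add: rinv_right[of X, OF d] mident_def)
    finally show "mmul X Y r s = mident r s" .
  qed
  then have Y: "Y = rinv X" by (rule rinv_unique[of X, OF d uY])
  have sh: "rinv X (r+3) (s+3) = rinv X r s" for r s
  proof -
    have "Y r s = rinv X r s" using Y by simp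
    then show ?thesis by (simp add: Y_def)
  qed
  show ?thesis unfolding periodic_ut_def using sh by (simp add: rinv_diag rinv.simps)
qed

lemma minv_eq: "periodic_ut X \<Longrightarrow> minv X = rinv X"
  unfolding minv_def
proof (rule the_equality)
  assume p: "periodic_ut X"
  have d: "\<forall>r. X r r = mat 1" using p by (simp add: periodic_ut_def)
  show "periodic_ut (rinv X) \<and> mmul X (rinv X) = mident"
    using periodic_rinv[OF p] rinv_right[of X, OF d] by simp
  fix Y assume "periodic_ut Y \<and> mmul X Y = mident"
  then show "Y = rinv X" using rinv_unique[of X, OF d] periodic_ut_ut by blast
qed

lemma rinv_left:
  assumes d: "\<forall>r. X r r = mat 1" and u: "ut X"
  shows "mmul (rinv X) X = mident"
proof -
  have dZ: "\<forall>r. rinv X r r = mat 1" by (simp add: rinv_diag)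
  have ZW: "mmul (rinv X) (rinv (rinv X)) = mident" by (rule rinv_right[of "rinv X", OF dZ])
  have "X = mmul X mident" by (simp add: mmul_mident_r u)
  also have "\<dots> = mmul (mmul X (rinv X)) (rinv (rinv X))" by (simp only: ZW mmul_assoc)
  also have "\<dots> = rinv (rinv X)" by (simp add: rinv_right[of X, OF d] mmul_mident_l ut_rinv)
  finally have XW: "X = rinv (rinv X)" .
  have "mmul (rinv X) X = mmul (rinv X) (rinv (rinv X))"
    using arg_cong[OF XW, of "mmul (rinv X)"] .
  then show ?thesis using ZW by simp
qed




definition pp :: "nat \<Rightarrow> blk" where "pp r = x2 r (Suc r)"

lemma pp_val: "pp r = (if r mod 3 = 0 then enc 46 else if r mod 3 = 1 then enc 68 else enc 217)"
  by (simp add: pp_def x2_def exact_M0_def encd_def Let_def)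

lemma pp_shift: "L mod 3 = c \<Longrightarrow> pp (r + L) = pp (r + c)"
proof -
  assume "L mod 3 = c"
  then have "(r + L) mod 3 = (r + c) mod 3" by (metis mod_add_right_eq)
  then show ?thesis by (simp only: pp_val)
qed

lemma periodic_x2: "periodic_ut x2" by (simp add: x2_def periodic_exact)
lemma periodic_x0: "periodic_ut x0" by (simp add: x0_def periodic_exact)
lemma ut_x2: "ut x2" by (rule periodic_ut_ut[OF periodic_x2])
lemma d_x2: "\<forall>r. x2 r r = mat 1" using periodic_x2 by (simp add: periodic_ut_def)

abbreviation Zi :: imat where "Zi \<equiv> rinv x2"

lemma Zx2: "mmul Zi x2 = mident" by (rule rinv_left[of x2, OF d_x2 ut_x2])
lemma x2Z: "mmul x2 Zi = mident" by (rule rinv_right[of x2, OF d_x2])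

lemma y0_eq: "y0 = mmul (mmul x2 x0) Zi"
  by (simp add: y0_def minv_eq[OF periodic_x2])

lemma periodic_y0: "periodic_ut y0"
  unfolding y0_eq by (intro periodic_mmul periodic_x2 periodic_x0 periodic_rinv)

lemma ZxW: "mmul Zi (mmul x2 (mmul A B)) = mmul A B"
proof -
  have "mmul Zi (mmul x2 (mmul A B)) = mmul (mmul Zi x2) (mmul A B)" by (simp only: mmul_assoc)
  also have "\<dots> = mmul A B" by (simp add: Zx2 mmul_mident_l ut_mmul)
  finally show ?thesis .
qed

lemma y0_pow: "1 \<le> n \<Longrightarrow> mpow y0 n = mmul (mmul x2 (mpow x0 n)) Zi"
proof (induction n rule: dec_induct)
  case base
  show ?case by (simp add: mmul_mident_l ut_mmul ut_x0 y0_eq)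
next
  case (step n)
  have "mpow y0 (Suc n) = mmul (mmul (mmul x2 (mpow x0 n)) Zi) (mmul (mmul x2 x0) Zi)"
    using step.IH by (simp add: y0_eq)
  also have "\<dots> = mmul x2 (mmul (mpow x0 n) (mmul Zi (mmul x2 (mmul x0 Zi))))"
    by (simp only: mmul_assoc)
  also have "\<dots> = mmul (mmul x2 (mpow x0 (Suc n))) Zi"
    by (simp only: ZxW mpow.simps mmul_assoc)
  finally show ?case .
qed

lemma x2_approx: "eqK 1 x2 (madd mident (band 1 pp))"
  unfolding eqK_def
proof (intro allI impI)
  fix r s :: nat assume "s \<le> r + 1"
  then have "s < r \<or> s = r \<or> s = Suc r" by auto
  then show "x2 r s = madd mident (band 1 pp) r s"
  proof (elim disjE)
    assume "s < r" then show ?thesis using ut_x2 by (simp add: ut_def madd_def band_def mident_def)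
  next
    assume "s = r" then show ?thesis using d_x2 by (simp add: madd_def band_def mident_def)
  next
    assume "s = Suc r" then show ?thesis by (simp add: madd_def band_def mident_def pp_def)
  qed
qed

lemma Z_approx: "eqK 1 Zi (madd mident (band 1 pp))"
  unfolding eqK_def
proof (intro allI impI)
  fix r s :: nat assume "s \<le> r + 1"
  then have "s < r \<or> s = r \<or> s = Suc r" by auto
  then show "Zi r s = madd mident (band 1 pp) r s"
  proof (elim disjE)
    assume "s < r" then show ?thesis using ut_rinv[of x2] by (simp add: ut_def madd_def band_def mident_def)
  next
    assume "s = r" then show ?thesis by (simp add: madd_def band_def mident_def rinv_diag)
  next
    assume s: "s = Suc r"
    have "Zi r (Suc r) = - (x2 r (Suc r) ** mat 1)"
      using rinv.simps[of x2 r "Suc r"] by (simp add: rinv_diag)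
    then show ?thesis using s by (simp add: madd_def band_def mident_def pp_def blk_neg)
  qed
qed

lemma Q_decomp:
  assumes L: "1 \<le> L" and q: "Q L A B M"
  obtains N where "M = madd mident N" "lo L N" "eqK (Suc L) N (madd (band L A) (band (Suc L) B))"
proof -
  define N where "N = (\<lambda>r s. M r s - mident r s)"
  have uX: "ut M" and eX: "eqK (Suc L) M (model L A B)" using q by (auto simp: Q_def)
  have XN: "M = madd mident N" by (simp add: N_def madd_def)
  have loN: "lo L N"
    unfolding lo_def
  proof (intro allI impI)
    fix r s assume "s < r + L"
    show "N r s = 0"
    proof (cases "s < r")
      case True then show ?thesis using uX by (simp add: N_def ut_def mident_def)
    next
      case False
      then have "M r s = model L A B r s" using eX \<open>s < r + L\<close> by (simp add: eqK_def)
      then show ?thesis using \<open>s < r + L\<close> by (simp add: N_def model_def madd_def band_def)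
    qed
  qed
  have eNT: "eqK (Suc L) N (madd (band L A) (band (Suc L) B))" using eX
    by (auto simp: eqK_def N_def model_def madd_def)
  show ?thesis by (rule that[OF XN loN eNT])
qed

lemma conj_lemma:
  assumes L: "1 \<le> L" and q: "Q L (\<lambda>_. A) (\<lambda>_. B) M" and c: "L mod 3 = c"
  shows "eqK (Suc L) (mmul (mmul x2 M) Zi) (model L (\<lambda>_. A) (\<lambda>r. B + pp r ** A + A ** pp (r + c)))"
proof -
  obtain N where MN: "M = madd mident N" and loN: "lo L N"
    and eNT: "eqK (Suc L) N (madd (band L (\<lambda>_. A)) (band (Suc L) (\<lambda>_. B)))"
    using Q_decomp[OF L q] by blast
  define T where "T = madd (band L (\<lambda>_. A)) (band (Suc L) (\<lambda>_. B))"
  define W where "W = madd mident (band 1 pp)"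
  have loT: "lo L T" by (auto simp: lo_def T_def madd_def band_def)
  have loW: "lo 0 W" by (auto simp: lo_def W_def madd_def band_def mident_def)
  have lox2: "lo 0 x2" by (simp add: lo0 ut_x2)
  have loZ: "lo 0 Zi" by (simp add: lo0 ut_rinv)
  have eW: "eqK 1 x2 W" using x2_approx by (simp add: W_def)
  have eZ: "eqK 1 Zi W" using Z_approx by (simp add: W_def)
  have eNT': "eqK (Suc L) N T" using eNT by (simp add: T_def)
  have c1: "eqK (Suc L) (mmul x2 N) (mmul W T)"
    by (rule eqK_cong[OF eW eNT' lox2 loW loN loT]) auto
  have lo1: "lo L (mmul x2 N)" using lo_mmul[OF lox2 loN] by simp
  have lo2: "lo L (mmul W T)" using lo_mmul[OF loW loT] by simp
  have c2: "eqK (Suc L) (mmul (mmul x2 N) Zi) (mmul (mmul W T) W)"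
    by (rule eqK_cong[OF c1 eZ lo1 lo2 loZ loW]) auto
  have MZ: "mmul (mmul x2 M) Zi = madd mident (mmul (mmul x2 N) Zi)"
    unfolding MN by (simp add: mmul_madd_l mmul_madd_r mmul_mident_r ut_x2 x2Z)
  show ?thesis
    unfolding eqK_def
  proof (intro allI impI)
    fix r s assume s: "s \<le> r + Suc L"
    have "mmul (mmul x2 M) Zi r s = mident r s + mmul (mmul W T) W r s"
      using c2 s by (simp add: MZ madd_def eqK_def)
    also have "\<dots> = model L (\<lambda>_. A) (\<lambda>r. B + pp r ** A + A ** pp (r + c)) r s"
      using s L pp_shift[OF c, of r] unfolding W_def T_def model_def mident_band mmul_madd_l mmul_madd_r band_mmul
      by (simp add: madd_def band_def)
    finally show "mmul (mmul x2 M) Zi r s = model L (\<lambda>_. A) (\<lambda>r. B + pp r ** A + A ** pp (r + c)) r s" .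
  qed
qed




lemma has_form_from:
  assumes p: "periodic_ut X" and L: "1 \<le> L" and e: "eqK (Suc L) X (model L A B)"
  shows "has_form (L - 1) [(A 0, A 1, A 2), (B 0, B 1, B 2)] X"
proof -
  have ent: "X i (i + j) = model L A B i (i + j)" if "j \<le> Suc L" for i j
    using e that by (simp add: eqK_def)
  have z: "diag X j = (0, 0, 0)" if "1 \<le> j" "j \<le> L - 1" for j
  proof -
    have jj: "j \<le> Suc L" and jL: "j < L" and j1: "j \<noteq> 0" using that L by linarith+
    have "X i (i + j) = 0" for i using ent[OF jj, of i] jL j1 by (simp add: model_def madd_def band_def mident_def)
    from this[of 0] this[of 1] this[of 2] show ?thesis by (simp add: diag_def)
  qed
  have a: "diag X L = (A 0, A 1, A 2)"
  proof -
    have "X i (i + L) = A i" for i using ent[of L i] L by (simp add: model_def madd_def band_def mident_def)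
    from this[of 0] this[of 1] this[of 2] show ?thesis by (simp add: diag_def)
  qed
  have b: "diag X (Suc L) = (B 0, B 1, B 2)"
  proof -
    have "X i (i + Suc L) = B i" for i using ent[of "Suc L" i] L by (simp add: model_def madd_def band_def mident_def)
    from this[of 0] this[of 1] this[of 2] show ?thesis by (simp add: diag_def)
  qed
  show ?thesis unfolding has_form_def
  proof (intro conjI p allI impI)
    fix j assume "1 \<le> j \<and> j \<le> L - 1" then show "diag X j = (0, 0, 0)" using z by blast
  next
    fix k assume "k < length [(A 0, A 1, A 2), (B 0, B 1, B 2)]"
    then have "k = 0 \<or> k = 1" by auto
    then show "diag X (L - 1 + 1 + k) = [(A 0, A 1, A 2), (B 0, B 1, B 2)] ! k"
      using a b L by auto
  qed
qed

lemma two_adic: "1 \<le> (n::nat) \<Longrightarrow> \<exists>r m. n = 2^r * m \<and> odd m"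
proof (induction n rule: less_induct)
  case (less n)
  show ?case
  proof (cases "odd n")
    case True then show ?thesis by (rule_tac x=0 in exI) auto
  next
    case False
    then obtain k where k: "n = 2 * k" by blast
    then have "1 \<le> k" "k < n" using less.prems by auto
    then obtain r m where "k = 2^r * m" "odd m" using less.IH by blast
    then show ?thesis using k by (rule_tac x="Suc r" in exI, rule_tac x=m in exI) auto
  qed
qed

lemma pow2_mod3: "(2::nat)^r mod 3 = (if odd r then 2 else 1)"
proof (induction r)
  case 0 then show ?case by simp
next
  case (Suc r)
  have "(2::nat)^Suc r mod 3 = 2 * (2^r mod 3) mod 3" by (simp add: mod_mult_right_eq)
  then show ?case using Suc by auto
qed

lemma x0_cases:
  assumes n: "1 \<le> n"
  shows "Q 1 (\<lambda>_. enc 11) (\<lambda>_. enc 17) (mpow x0 n) \<or> Q 1 (\<lambda>_. enc 11) (\<lambda>_. enc 11) (mpow x0 n)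
    \<or> (\<exists>r. r \<ge> 1 \<and> odd r \<and> Q (2^r) (\<lambda>_. enc 26) (\<lambda>_. 0) (mpow x0 n))
    \<or> (\<exists>r. r \<ge> 2 \<and> even r \<and> Q (2^r) (\<lambda>_. enc 11) (\<lambda>_. 0) (mpow x0 n))"
proof -
  obtain r m where nm: "n = 2^r * m" and m: "odd m" using two_adic[OF n] by blast
  show ?thesis
  proof (cases "r = 0")
    case True
    then have "odd n" using nm m by simp
    from x0_odd[OF this] show ?thesis by (auto simp: Q_def ut_mpow numeral_2_eq_2)
  next
    case False
    then have r1: "1 \<le> r" by simp
    define A where "A = (if odd r then enc 26 else enc 11)"
    have q: "Q (2^r) (\<lambda>_. A) (\<lambda>_. 0) (mpow x0 (2^r))" using x0_pow2[OF r1] by (simp add: A_def)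
    have L2: "2 \<le> (2::nat)^r" using r1 by (metis one_le_numeral power_increasing power_one_right)
    obtain k where mk: "m = 1 + 2*k" using m by (metis oddE add.commute)
    have "mpow x0 n = mpow (mpow x0 (2^r)) (1 + 2*k)" by (simp only: nm mk mpow_mult)
    then have "eqK (Suc (2^r)) (mpow x0 n) (mpow x0 (2^r))" using Q_odd[OF L2 q] by simp
    then have "Q (2^r) (\<lambda>_. A) (\<lambda>_. 0) (mpow x0 n)"
      using q eqK_trans unfolding Q_def by (blast intro: ut_mpow)
    then show ?thesis using r1 by (cases "odd r") (auto simp: A_def)
  qed
qed




lemma x_form:
  assumes "1 \<le> L" "Q L (\<lambda>_. A) (\<lambda>_. B) X" "periodic_ut X"
  shows "has_form (L - 1) [(A, A, A), (B, B, B)] X"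
proof -
  have "eqK (Suc L) X (model L (\<lambda>_. A) (\<lambda>_. B))" using assms(2) by (simp add: Q_def)
  from has_form_from[OF assms(3,1) this] show ?thesis by simp
qed

lemma y_form:
  assumes n: "1 \<le> n" and L: "1 \<le> L" and q: "Q L (\<lambda>_. A) (\<lambda>_. B) (mpow x0 n)" and c: "L mod 3 = c"
  shows "has_form (L - 1) [(A, A, A), (B + pp 0 ** A + A ** pp (0 + c), B + pp 1 ** A + A ** pp (1 + c),
     B + pp 2 ** A + A ** pp (2 + c))] (mpow y0 n)"
proof -
  have "eqK (Suc L) (mpow y0 n) (model L (\<lambda>_. A) (\<lambda>r. B + pp r ** A + A ** pp (r + c)))"
    using conj_lemma[OF L q c] by (simp add: y0_pow[OF n])
  from has_form_from[OF periodic_mpow[OF periodic_y0] L this] show ?thesis by simp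
qed

lemma valsA: "[(enc 11, enc 11, enc 11), (enc 17 + pp 0 ** enc 11 + enc 11 ** pp (0 + 1),
   enc 17 + pp 1 ** enc 11 + enc 11 ** pp (1 + 1), enc 17 + pp 2 ** enc 11 + enc 11 ** pp (2 + 1))]
   = [encd 11 11 11, encd 44 219 177]"
  by (simp add: encd_def pp_val blk_simps)
lemma valsB: "[(enc 11, enc 11, enc 11), (enc 11 + pp 0 ** enc 11 + enc 11 ** pp (0 + 1),
   enc 11 + pp 1 ** enc 11 + enc 11 ** pp (1 + 1), enc 11 + pp 2 ** enc 11 + enc 11 ** pp (2 + 1))]
   = [encd 11 11 11, encd 54 193 171]"
  by (simp add: encd_def pp_val blk_simps)
lemma valsC: "[(enc 26, enc 26, enc 26), (0 + pp 0 ** enc 26 + enc 26 ** pp (0 + 2),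
   0 + pp 1 ** enc 26 + enc 26 ** pp (1 + 2), 0 + pp 2 ** enc 26 + enc 26 ** pp (2 + 2))]
   = [encd 26 26 26, encd 0 157 106]"
  by (simp add: encd_def pp_val blk_simps)
lemma valsD: "[(enc 11, enc 11, enc 11), (0 + pp 0 ** enc 11 + enc 11 ** pp (0 + 1),
   0 + pp 1 ** enc 11 + enc 11 ** pp (1 + 1), 0 + pp 2 ** enc 11 + enc 11 ** pp (2 + 1))]
   = [encd 11 11 11, encd 61 202 160]"
  by (simp add: encd_def pp_val blk_simps)

lemma L2r: "1 \<le> r \<Longrightarrow> 1 \<le> (2::nat)^r" by simp

theorem proposition4p5:
  shows "(\<forall>n\<ge>1.
            has_form 0 [encd 11 11 11, encd 17 17 17] (mpow x0 n)
          \<or> has_form 0 [encd 11 11 11, encd 11 11 11] (mpow x0 n)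
          \<or> (\<exists>r. r \<ge> 1 \<and> odd r \<and> has_form (2 ^ r - 1) [encd 26 26 26, encd 0 0 0] (mpow x0 n))
          \<or> (\<exists>r. r \<ge> 2 \<and> even r \<and> has_form (2 ^ r - 1) [encd 11 11 11, encd 0 0 0] (mpow x0 n)))
       \<and> (\<forall>n\<ge>1.
            has_form 0 [encd 11 11 11, encd 44 219 177] (mpow y0 n)
          \<or> has_form 0 [encd 11 11 11, encd 54 193 171] (mpow y0 n)
          \<or> (\<exists>r. r \<ge> 1 \<and> odd r \<and> has_form (2 ^ r - 1) [encd 26 26 26, encd 0 157 106] (mpow y0 n))
          \<or> (\<exists>r. r \<ge> 2 \<and> even r \<and> has_form (2 ^ r - 1) [encd 11 11 11, encd 61 202 160] (mpow y0 n)))"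
proof (intro conjI allI impI)
  fix n :: nat assume n: "n \<ge> 1"
  have px: "periodic_ut (mpow x0 n)" by (rule periodic_mpow[OF periodic_x0])
  from x0_cases[OF n]
  show "has_form 0 [encd 11 11 11, encd 17 17 17] (mpow x0 n)
          \<or> has_form 0 [encd 11 11 11, encd 11 11 11] (mpow x0 n)
          \<or> (\<exists>r. r \<ge> 1 \<and> odd r \<and> has_form (2 ^ r - 1) [encd 26 26 26, encd 0 0 0] (mpow x0 n))
          \<or> (\<exists>r. r \<ge> 2 \<and> even r \<and> has_form (2 ^ r - 1) [encd 11 11 11, encd 0 0 0] (mpow x0 n))"
  proof (elim disjE exE conjE)
    assume q: "Q 1 (\<lambda>_. enc 11) (\<lambda>_. enc 17) (mpow x0 n)"
    from x_form[OF _ q px] show ?thesis by (simp add: encd_def)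
  next
    assume q: "Q 1 (\<lambda>_. enc 11) (\<lambda>_. enc 11) (mpow x0 n)"
    from x_form[OF _ q px] show ?thesis by (simp add: encd_def)
  next
    fix r assume r: "1 \<le> r" "odd r" and q: "Q (2^r) (\<lambda>_. enc 26) (\<lambda>_. 0) (mpow x0 n)"
    from x_form[OF L2r[OF r(1)] q px] have "has_form (2 ^ r - 1) [encd 26 26 26, encd 0 0 0] (mpow x0 n)"
      by (simp add: encd_def e0)
    then show ?thesis using r by blast
  next
    fix r assume r: "2 \<le> r" "even r" and q: "Q (2^r) (\<lambda>_. enc 11) (\<lambda>_. 0) (mpow x0 n)"
    have r1: "1 \<le> r" using r by simp
    from x_form[OF L2r[OF r1] q px] have "has_form (2 ^ r - 1) [encd 11 11 11, encd 0 0 0] (mpow x0 n)"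
      by (simp add: encd_def e0)
    then show ?thesis using r by blast
  qed
next
  fix n :: nat assume n: "n \<ge> 1"
  from x0_cases[OF n]
  show "has_form 0 [encd 11 11 11, encd 44 219 177] (mpow y0 n)
          \<or> has_form 0 [encd 11 11 11, encd 54 193 171] (mpow y0 n)
          \<or> (\<exists>r. r \<ge> 1 \<and> odd r \<and> has_form (2 ^ r - 1) [encd 26 26 26, encd 0 157 106] (mpow y0 n))
          \<or> (\<exists>r. r \<ge> 2 \<and> even r \<and> has_form (2 ^ r - 1) [encd 11 11 11, encd 61 202 160] (mpow y0 n))"
  proof (elim disjE exE conjE)
    assume q: "Q 1 (\<lambda>_. enc 11) (\<lambda>_. enc 17) (mpow x0 n)"
    from y_form[OF n _ q, of 1] have "has_form 0 [encd 11 11 11, encd 44 219 177] (mpow y0 n)"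
      unfolding valsA by simp
    then show ?thesis by blast
  next
    assume q: "Q 1 (\<lambda>_. enc 11) (\<lambda>_. enc 11) (mpow x0 n)"
    from y_form[OF n _ q, of 1] have "has_form 0 [encd 11 11 11, encd 54 193 171] (mpow y0 n)"
      unfolding valsB by simp
    then show ?thesis by blast
  next
    fix r assume r: "1 \<le> r" "odd r" and q: "Q (2^r) (\<lambda>_. enc 26) (\<lambda>_. 0) (mpow x0 n)"
    have c: "(2::nat)^r mod 3 = 2" using r pow2_mod3[of r] by simp
    from y_form[OF n L2r[OF r(1)] q c] have "has_form (2 ^ r - 1) [encd 26 26 26, encd 0 157 106] (mpow y0 n)"
      unfolding valsC .
    then show ?thesis using r by blast
  next
    fix r assume r: "2 \<le> r" "even r" and q: "Q (2^r) (\<lambda>_. enc 11) (\<lambda>_. 0) (mpow x0 n)"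
    have r1: "1 \<le> r" using r by simp
    have c: "(2::nat)^r mod 3 = 1" using r pow2_mod3[of r] by simp
    from y_form[OF n L2r[OF r1] q c] have "has_form (2 ^ r - 1) [encd 11 11 11, encd 61 202 160] (mpow y0 n)"
      unfolding valsD .
    then show ?thesis using r by blast
  qed
qed


end
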